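(* Assume $FCA$. Then there is an entangled set of reals.
   Context: For $k\in\omega$, $t:k\to\{>,<\}$ and disjoint $a=\{a_0<\dots<a_{k-1}\}$, $b=\{b_0<\dots<b_{k-1}\}$ in $[\mathbb R]^k$ (increasing enumerations), $(a,b)$ realizes $t$ if $a_i\ t(i)\ b_i$ for every $i<k$. An uncountable $\mathcal E\subseteq\mathbb R$ is $k$-entangled if for every uncountable family $\mathcal A\subseteq[\mathcal E]^k$ of pairwise disjoint sets and every $t:k\to\{>,<\}$ there are $a\neq b$ in $\mathcal A$ such that $(a,b)$ realizes $t$; it is entangled if it is $k$-entangled for every $k\in\omega$. A type is a sequence $\tau=\{(m_k,n_{k+1},r_{k+1})\}_{k\in\omega}$ of natural numbers with $m_0=1$; $n_k\ge2$ for $k\ge1$; every $r\in\omega$ equals $r_k$ for infinitely many $k$; $m_k>r_{k+1}$; and $m_{k+1}=r_{k+1}+(m_k-r_{k+1})n_{k+1}$ for all $k$. For a set of ordinals $X$ and $\mathcal F\subseteq[X]^{<\omega}$, $\mathcal F_k$ is the set of elements of rank $k$ in $(\mathcal F,\subsetneq)$; $A\sqsubseteq B$ means $A\subseteq B$ and every element of $B$ below an element of $A$ is in $A$; $A<B$ means every element of $A$ is below every element of $B$. $\mathcal F$ is a construction scheme over $X$ of type $\tau$ if (1) every finite subset of $X$ lies in a member of $\mathcal F$; (2) $|F|=m_k$ for $F\in\mathcal F_k$; (3) $E\cap F\sqsubseteq E,F$ for $E,F\in\mathcal F_k$; (4) each $F\in\mathcal F_{k+1}$ is the union of uniquely determined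 $F_0,\dots,F_{n_{k+1}-1}\in\mathcal F_k$ forming a $\Delta$-system with root $R(F)$, $|R(F)|=r_{k+1}$, $R(F)<F_0\setminus R(F)<\dots<F_{n_{k+1}-1}\setminus R(F)$. For a construction scheme $\mathcal F$ over $\omega_1$, $l\ge1$, $F\in\mathcal F_l$ and finite $\mathcal C\subseteq[\omega_1]^{<\omega}$: $F$ fully captures $\mathcal C$ if $|\mathcal C|=n_l$ and $\mathcal C$ can be enumerated as $\{c_i\}_{i<n_l}$ with $c_i\subseteq F_i$, $c_i\setminus R(F)\neq\emptyset$ and $\phi_i[c_0]=c_i$ where $\phi_i:F_0\to F_i$ is the increasing bijection. $\mathcal F$ is fully capturing if for every uncountable $S\subseteq[\omega_1]^{<\omega}$ and every $k\in\omega$ there are a finite $\mathcal C\subseteq S$, $l>k$ and $F\in\mathcal F_l$ fully capturing $\mathcal C$. $FCA$ is the statement: for every type $\tau$ there is a fully capturing construction scheme over $\omega_1$ of type $\tau$. *)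

theory Defs
  imports Complex_Main "HOL-Library.Countable_Set"
begin

definition ksubsets :: "nat \<Rightarrow> 'b set \<Rightarrow> 'b set set" where
  "ksubsets k E = {a. a \<subseteq> E \<and> finite a \<and> card a = k}"

text \<open>t i = True encodes the symbol <, t i = False encodes the symbol >.
  The i-th element (increasing enumeration) of a finite set a of reals is
  sorted_list_of_set a ! i.\<close>
definition realizes :: "nat \<Rightarrow> (nat \<Rightarrow> bool) \<Rightarrow> real set \<Rightarrow> real set \<Rightarrow> bool" where
  "realizes k t a b \<longleftrightarrow> a \<inter> b = {} \<and>
     (\<forall>i<k. if t i then sorted_list_of_set a ! i < sorted_list_of_set b ! i
                  else sorted_list_of_set a ! i > sorted_list_of_set b ! i)"

definition k_entangled :: "nat \<Rightarrow> real set \<Rightarrow> bool" where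
  "k_entangled k E \<longleftrightarrow> \<not> countable E \<and>
     (\<forall>A t. A \<subseteq> ksubsets k E \<and> \<not> countable A \<and>
            (\<forall>a\<in>A. \<forall>b\<in>A. a \<noteq> b \<longrightarrow> a \<inter> b = {}) \<longrightarrow>
            (\<exists>a\<in>A. \<exists>b\<in>A. a \<noteq> b \<and> realizes k t a b))"

definition entangled :: "real set \<Rightarrow> bool" where
  "entangled E \<longleftrightarrow> (\<forall>k. k_entangled k E)"

text \<open>A type tau = ((m_k, n_(k+1), r_(k+1)))_k is given by three sequences m n r :: nat => nat;
  the values n 0 and r 0 are irrelevant.\<close>
definition is_type :: "(nat \<Rightarrow> nat) \<Rightarrow> (nat \<Rightarrow> nat) \<Rightarrow> (nat \<Rightarrow> nat) \<Rightarrow> bool" where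
  "is_type m n r \<longleftrightarrow> m 0 = 1 \<and> (\<forall>k\<ge>1. n k \<ge> 2) \<and>
     (\<forall>x. infinite {k. k \<ge> 1 \<and> r k = x}) \<and>
     (\<forall>k. m k > r (Suc k)) \<and>
     (\<forall>k. m (Suc k) = r (Suc k) + (m k - r (Suc k)) * n (Suc k))"

definition chain_below :: "'a set set \<Rightarrow> 'a set \<Rightarrow> nat \<Rightarrow> bool" where
  "chain_below FF A k \<longleftrightarrow> (\<exists>c::nat \<Rightarrow> 'a set. c k = A \<and> (\<forall>i\<le>k. c i \<in> FF) \<and>
       (\<forall>i<k. c i \<subset> c (Suc i)))"

definition has_rank :: "'a set set \<Rightarrow> 'a set \<Rightarrow> nat \<Rightarrow> bool" where
  "has_rank FF A k \<longleftrightarrow> A \<in> FF \<and> chain_below FF A k \<and> \<not> chain_below FF A (Suc k)"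

definition level :: "'a set set \<Rightarrow> nat \<Rightarrow> 'a set set" where
  "level FF k = {A. has_rank FF A k}"

definition set_less :: "'a::order set \<Rightarrow> 'a set \<Rightarrow> bool" where
  "set_less A B \<longleftrightarrow> (\<forall>a\<in>A. \<forall>b\<in>B. a < b)"

definition initial_sub :: "'a::order set \<Rightarrow> 'a set \<Rightarrow> bool" where
  "initial_sub A B \<longleftrightarrow> A \<subseteq> B \<and> (\<forall>b\<in>B. (\<exists>a\<in>A. b < a) \<longrightarrow> b \<in> A)"

definition decomp :: "'a::order set set \<Rightarrow> (nat \<Rightarrow> nat) \<Rightarrow> (nat \<Rightarrow> nat) \<Rightarrow> nat \<Rightarrow>
     'a set \<Rightarrow> (nat \<Rightarrow> 'a set) \<Rightarrow> 'a set \<Rightarrow> bool" where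
  "decomp FF n r k F Fs R \<longleftrightarrow>
     (\<forall>i<n (Suc k). Fs i \<in> level FF k) \<and>
     F = (\<Union>i<n (Suc k). Fs i) \<and>
     (\<forall>i<n (Suc k). \<forall>j<n (Suc k). i \<noteq> j \<longrightarrow> Fs i \<inter> Fs j = R) \<and>
     card R = r (Suc k) \<and>
     (\<forall>i<n (Suc k). set_less R (Fs i - R)) \<and>
     (\<forall>i. Suc i < n (Suc k) \<longrightarrow> set_less (Fs i - R) (Fs (Suc i) - R))"

definition construction_scheme :: "'a::order set \<Rightarrow> 'a set set \<Rightarrow>
     (nat \<Rightarrow> nat) \<Rightarrow> (nat \<Rightarrow> nat) \<Rightarrow> (nat \<Rightarrow> nat) \<Rightarrow> bool" where
  "construction_scheme X FF m n r \<longleftrightarrow>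
     (\<forall>F\<in>FF. finite F \<and> F \<subseteq> X) \<and>
     (\<forall>A. finite A \<and> A \<subseteq> X \<longrightarrow> (\<exists>F\<in>FF. A \<subseteq> F)) \<and>
     (\<forall>k. \<forall>F\<in>level FF k. card F = m k) \<and>
     (\<forall>k. \<forall>E\<in>level FF k. \<forall>F\<in>level FF k. initial_sub (E \<inter> F) E \<and> initial_sub (E \<inter> F) F) \<and>
     (\<forall>k. \<forall>F\<in>level FF (Suc k).
        (\<exists>Fs R. decomp FF n r k F Fs R) \<and>
        (\<forall>Fs R Gs Q. decomp FF n r k F Fs R \<and> decomp FF n r k F Gs Q \<longrightarrow>
            (\<forall>i<n (Suc k). Fs i = Gs i)))"

definition incr_bij :: "'a::order set \<Rightarrow> 'a set \<Rightarrow> ('a \<Rightarrow> 'a) \<Rightarrow> bool" where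
  "incr_bij A B f \<longleftrightarrow> bij_betw f A B \<and> strict_mono_on A f"

text \<open>The decomposition (F_i) and the root R(F)
  are unique, as are the increasing bijections phi_i, so existential quantification over
  them is the same as referring to them.\<close>
definition fully_captures :: "'a::order set set \<Rightarrow> (nat \<Rightarrow> nat) \<Rightarrow> (nat \<Rightarrow> nat) \<Rightarrow> nat \<Rightarrow>
     'a set \<Rightarrow> 'a set set \<Rightarrow> bool" where
  "fully_captures FF n r l F C \<longleftrightarrow> l \<ge> 1 \<and> F \<in> level FF l \<and> finite C \<and> card C = n l \<and>
     (\<exists>Fs R. decomp FF n r (l - 1) F Fs R \<and>
       (\<exists>c::nat \<Rightarrow> 'a set. C = c ` {..<n l} \<and>
          (\<forall>i<n l. c i \<subseteq> Fs i \<and> c i - R \<noteq> {} \<and>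
             (\<exists>\<phi>. incr_bij (Fs 0) (Fs i) \<phi> \<and> \<phi> ` c 0 = c i))))"

definition fully_capturing :: "'a::order set set \<Rightarrow> (nat \<Rightarrow> nat) \<Rightarrow> (nat \<Rightarrow> nat) \<Rightarrow> bool" where
  "fully_capturing FF n r \<longleftrightarrow>
     (\<forall>S k. (\<forall>s\<in>S. finite s) \<and> \<not> countable S \<longrightarrow>
        (\<exists>C l F. C \<subseteq> S \<and> finite C \<and> l > k \<and> F \<in> level FF l \<and> fully_captures FF n r l F C))"

text \<open>omega_1 is represented by a type 'a with a well-order that is uncountable and all of
  whose proper initial segments are countable (these assumptions appear in the theorem).\<close>
definition FCA :: "'a::wellorder itself \<Rightarrow> bool" where
  "FCA _ \<longleftrightarrow> (\<forall>m n r. is_type m n r \<longrightarrow>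
      (\<exists>FF::'a set set. construction_scheme UNIV FF m n r \<and> fully_capturing FF n r))"

end

theory Submission
  imports Defs "HOL-Library.Nat_Bijection"
begin

fun mt :: "nat \<Rightarrow> nat" where
  "mt 0 = 1"
| "mt (Suc k) = fst (prod_decode k) + (mt k - fst (prod_decode k)) * (2 ^ mt k + 2)"

definition rt :: "nat \<Rightarrow> nat" where "rt k = (case k of 0 \<Rightarrow> 0 | Suc j \<Rightarrow> fst (prod_decode j))"
definition nt :: "nat \<Rightarrow> nat" where "nt k = (case k of 0 \<Rightarrow> 2 | Suc j \<Rightarrow> 2 ^ mt j + 2)"

lemma fst_pd_le: "fst (prod_decode k) \<le> k"
  by (metis le_prod_encode_1 prod.collapse prod_decode_inverse)

lemma mt_ge: "mt k \<ge> Suc k"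
proof (induction k)
  case 0 then show ?case by simp
next
  case (Suc k)
  let ?f = "fst (prod_decode k)"
  have f: "?f < mt k" using fst_pd_le[of k] Suc by linarith
  have "(mt k - ?f) * 2 \<le> (mt k - ?f) * (2 ^ mt k + 2)" by simp
  then show ?case using f Suc by simp
qed

lemma type_ok: "is_type mt nt rt"
  unfolding is_type_def
proof (intro conjI allI impI)
  fix x
  have "Suc ` prod_encode ` (\<lambda>y. (x, y)) ` UNIV \<subseteq> {k. 1 \<le> k \<and> rt k = x}"
    by (auto simp: rt_def)
  moreover have "infinite (Suc ` prod_encode ` (\<lambda>y. (x, y)) ` UNIV)"
    by (subst finite_image_iff, simp, subst finite_image_iff,
        simp add: inj_on_def inj_prod_encode[THEN inj_onD], subst finite_image_iff) (auto simp: inj_on_def)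
  ultimately show "infinite {k. 1 \<le> k \<and> rt k = x}" using finite_subset by blast
next
  fix k show "rt (Suc k) < mt k" using fst_pd_le[of k] mt_ge[of k] by (simp add: rt_def)
next
  fix k show "mt (Suc k) = rt (Suc k) + (mt k - rt (Suc k)) * nt (Suc k)" by (simp add: rt_def nt_def)
next
  fix k :: nat assume "k \<ge> 1" then show "nt k \<ge> 2" by (cases k) (auto simp: nt_def)
qed simp

fun wt :: "(nat \<Rightarrow> nat) \<Rightarrow> nat \<Rightarrow> real" where
  "wt C 0 = 1"
| "wt C (Suc l) = wt C l / (4 * real (C (Suc l)))"

declare wt.simps(2)[simp del]
lemmas wt_Suc = wt.simps(2)

definition XX :: "(nat \<Rightarrow> nat) \<Rightarrow> (nat \<Rightarrow> nat) \<Rightarrow> real" where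
  "XX C D = (\<Sum>l. real (D l) * wt C l)"

lemma wt_pos: "(\<forall>l. C l \<ge> 1) \<Longrightarrow> wt C l > 0"
proof (induction l)
  case (Suc l)
  have "real (C (Suc l)) > 0" using Suc.prems by (metis of_nat_0_less_iff less_le_trans zero_less_one)
  then show ?case using Suc by (simp add: wt_Suc)
qed simp

lemma wt_shift: assumes "\<forall>l. C l \<ge> 1" shows "wt C (L + i) \<le> wt C L * (1/4)^i"
proof (induction i)
  case 0 then show ?case by simp
next
  case (Suc i)
  have c: "real (C (Suc (L+i))) \<ge> 1" using assms by simp
  have p: "wt C (L+i) > 0" using wt_pos assms by blast
  have "wt C (L + Suc i) = wt C (L+i) / (4 * real (C (Suc (L+i))))" by (simp add: wt_Suc)
  also have "\<dots> \<le> wt C (L+i) / 4" using c p by (intro divide_left_mono) auto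
  also have "\<dots> \<le> wt C L * (1/4)^Suc i" using Suc by simp
  finally show ?case .
qed

lemma term_bound:
  assumes "\<forall>l. C l \<ge> 1" "\<forall>l. D l \<le> C l"
  shows "real (D (Suc j)) * wt C (Suc j) \<le> wt C j / 4"
proof -
  have c: "real (C (Suc j)) \<ge> 1" using assms by simp
  have p: "wt C j > 0" using wt_pos assms by blast
  have "real (D (Suc j)) * wt C (Suc j) \<le> real (C (Suc j)) * wt C (Suc j)"
    using assms(2) wt_pos[OF assms(1), of "Suc j"] by (intro mult_right_mono) auto
  also have "\<dots> = wt C j / 4" using c by (simp add: field_simps wt_Suc)
  finally show ?thesis .
qed

lemma tail_bound:
  assumes "\<forall>l. C l \<ge> 1" "\<forall>l. D l \<le> C l"
  shows "summable (\<lambda>i. real (D (i + Suc L)) * wt C (i + Suc L))"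
    and "(\<Sum>i. real (D (i + Suc L)) * wt C (i + Suc L)) \<le> wt C L / 3"
proof -
  have b: "real (D (i + Suc L)) * wt C (i + Suc L) \<le> wt C L * (1/4) ^ Suc i" for i
  proof -
    have "real (D (i + Suc L)) * wt C (i + Suc L) \<le> wt C (L + i) / 4"
      using term_bound[OF assms, of "L+i"] by (simp del: wt.simps add: add.commute)
    also have "\<dots> \<le> wt C L * (1/4)^i / 4" using wt_shift[OF assms(1), of L i] by simp
    finally show ?thesis by simp
  qed
  have nn: "0 \<le> real (D (i + Suc L)) * wt C (i + Suc L)" for i
    using wt_pos[OF assms(1)] by (simp add: less_imp_le)
  have g: "summable (\<lambda>i. wt C L * (1/4::real) ^ Suc i)"
    by (intro summable_mult summable_geometric) simp_all
  show s: "summable (\<lambda>i. real (D (i + Suc L)) * wt C (i + Suc L))"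
    by (rule summable_comparison_test'[OF g, of 0]) (use b nn in auto)
  have "(\<Sum>i. wt C L * (1/4::real) ^ Suc i) = wt C L / 3"
  proof -
    have "(\<Sum>i. (1/4::real) ^ Suc i) = 1/3"
    proof -
      have "(\<Sum>i. (1/4::real) ^ Suc i) = (\<Sum>i. (1/4) * (1/4::real) ^ i)" by simp
      also have "\<dots> = (1/4) * (\<Sum>i. (1/4::real) ^ i)" by (rule suminf_mult) (simp add: summable_geometric)
      also have "\<dots> = 1/3" using suminf_geometric[of "1/4::real"] by simp
      finally show ?thesis .
    qed
    moreover have "(\<Sum>i. wt C L * (1/4::real) ^ Suc i) = wt C L * (\<Sum>i. (1/4::real) ^ Suc i)"
      by (rule suminf_mult) (use summable_iff_shift[of "\<lambda>i. (1/4::real)^i" 1] summable_geometric[of "1/4::real"] in simp)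
    ultimately show ?thesis by simp
  qed
  moreover have "(\<Sum>i. real (D (i + Suc L)) * wt C (i + Suc L)) \<le> (\<Sum>i. wt C L * (1/4::real) ^ Suc i)"
    by (rule suminf_le[OF b s g])
  ultimately show "(\<Sum>i. real (D (i + Suc L)) * wt C (i + Suc L)) \<le> wt C L / 3" by simp
qed

lemma summ:
  assumes "\<forall>l. C l \<ge> 1" "\<forall>l. D l \<le> C l"
  shows "summable (\<lambda>l. real (D l) * wt C l)"
  using tail_bound(1)[OF assms, of 0] summable_iff_shift[of "\<lambda>l. real (D l) * wt C l" 1] by simp

lemma lex_less:
  assumes C: "\<forall>l. C l \<ge> 1" and D: "\<forall>l. D l \<le> C l" and D': "\<forall>l. D' l \<le> C l"
    and eq: "\<forall>j<L. D j = D' j" and lt: "D L < D' L"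
  shows "XX C D < XX C D'"
proof -
  let ?g = "\<lambda>l. real (D l) * wt C l" and ?g' = "\<lambda>l. real (D' l) * wt C l"
  have sg: "summable ?g" using summ[OF C D] .
  have sg': "summable ?g'" using summ[OF C D'] .
  have w: "wt C L > 0" using wt_pos[OF C] .
  have split: "suminf f = (\<Sum>i. f (i + Suc L)) + (\<Sum>i<Suc L. f i)" if "summable f" for f :: "nat \<Rightarrow> real"
    using suminf_split_initial_segment[OF that, of "Suc L"] by simp
  have t: "(\<Sum>i. ?g (i + Suc L)) \<le> wt C L / 3" using tail_bound(2)[OF C D] .
  have t': "(\<Sum>i. ?g' (i + Suc L)) \<ge> 0"
    using wt_pos[OF C] by (intro suminf_nonneg tail_bound(1)[OF C D']) (simp add: less_imp_le)
  have fs: "(\<Sum>i<Suc L. ?g i) + wt C L \<le> (\<Sum>i<Suc L. ?g' i)"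
  proof -
    have "(\<Sum>i<L. ?g i) = (\<Sum>i<L. ?g' i)" using eq by simp
    moreover have "?g L + wt C L \<le> ?g' L"
    proof -
      have "real (D L) + 1 \<le> real (D' L)" using lt by linarith
      then have "(real (D L) + 1) * wt C L \<le> real (D' L) * wt C L" using w by (intro mult_right_mono) auto
      then show ?thesis by (simp add: algebra_simps)
    qed
    ultimately show ?thesis by simp
  qed
  have "XX C D = (\<Sum>i. ?g (i + Suc L)) + (\<Sum>i<Suc L. ?g i)" unfolding XX_def by (rule split[OF sg])
  moreover have "XX C D' = (\<Sum>i. ?g' (i + Suc L)) + (\<Sum>i<Suc L. ?g' i)" unfolding XX_def by (rule split[OF sg'])
  ultimately show ?thesis using t t' fs w by linarith
qed

lemma lex_cmp:
  assumes C: "\<forall>l. C l \<ge> 1" and D: "\<forall>l. D l \<le> C l" and D': "\<forall>l. D' l \<le> C l"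
    and eq: "\<forall>j<L. D j = D' j" and ne: "D L \<noteq> D' L"
  shows "XX C D < XX C D' \<longleftrightarrow> D L < D' L"
proof
  assume "XX C D < XX C D'"
  show "D L < D' L"
  proof (rule ccontr)
    assume "\<not> D L < D' L"
    then have "D' L < D L" using ne by simp
    moreover have "\<forall>j<L. D' j = D j" using eq by simp
    ultimately have "XX C D' < XX C D" using lex_less[OF C D' D] by blast
    with \<open>XX C D < XX C D'\<close> show False by simp
  qed
qed (rule lex_less[OF C D D' eq])

locale cs =
  fixes FF :: "'a::wellorder set set" and m n r :: "nat \<Rightarrow> nat"
  assumes CS: "construction_scheme UNIV FF m n r" and TY: "is_type m n r"
    and INF: "infinite (UNIV :: 'a set)"
begin

lemmas CSu = CS[unfolded construction_scheme_def]
lemmas CS1 = CSu[THEN conjunct1]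
lemmas CS2 = CSu[THEN conjunct2, THEN conjunct1]
lemmas CS3 = CSu[THEN conjunct2, THEN conjunct2, THEN conjunct1]
lemmas CS4 = CSu[THEN conjunct2, THEN conjunct2, THEN conjunct2, THEN conjunct1]
lemmas CS5 = CSu[THEN conjunct2, THEN conjunct2, THEN conjunct2, THEN conjunct2]

lemma fin: "F \<in> FF \<Longrightarrow> finite F"
  using CS1 by blast

lemma cover: "finite A \<Longrightarrow> \<exists>F\<in>FF. A \<subseteq> F"
  using CS2 by blast

lemma card_level: "F \<in> level FF k \<Longrightarrow> card F = m k"
  using CS3 by blast

lemma coh: "E \<in> level FF k \<Longrightarrow> F \<in> level FF k \<Longrightarrow> initial_sub (E \<inter> F) E"
  using CS4 by blast

lemma dec_ex: "F \<in> level FF (Suc k) \<Longrightarrow> \<exists>Fs R. decomp FF n r k F Fs R"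
  using CS5 by blast

lemma dec_uniq: "F \<in> level FF (Suc k) \<Longrightarrow> decomp FF n r k F Fs R \<Longrightarrow> decomp FF n r k F Gs Q
   \<Longrightarrow> i < n (Suc k) \<Longrightarrow> Fs i = Gs i"
  using CS5 by blast

lemma level_FF: "F \<in> level FF k \<Longrightarrow> F \<in> FF"
  by (simp add: level_def has_rank_def)

lemma level_fin: "F \<in> level FF k \<Longrightarrow> finite F"
  using fin level_FF by blast

lemma r_lt: "r (Suc k) < m k"
  using TY unfolding is_type_def by (elim conjE) (erule allE)

lemma n_ge2: "n (Suc k) \<ge> 2"
  using TY unfolding is_type_def by simp

lemma m_Suc: "m (Suc k) = r (Suc k) + (m k - r (Suc k)) * n (Suc k)"
  using TY unfolding is_type_def by (elim conjE) (erule allE)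

lemma m_less: "m k < m (Suc k)"
proof -
  have "(m k - r (Suc k)) * 2 \<le> (m k - r (Suc k)) * n (Suc k)" using n_ge2 by simp
  then show ?thesis using m_Suc[of k] r_lt[of k] by linarith
qed

lemma m_smono: "strict_mono m"
  by (simp add: strict_mono_Suc_iff m_less)

lemma m_pos: "m k \<ge> 1"
proof -
  have "m 0 = 1" using TY unfolding is_type_def by simp
  moreover have "m 0 \<le> m k" using m_smono by (simp add: strict_mono_less_eq)
  ultimately show ?thesis by simp
qed

lemma chain_bound:
  assumes "chain_below FF A k" "finite A"
  shows "k \<le> card A"
proof -
  obtain c where c: "c k = A" "\<forall>i<k. c i \<subset> c (Suc i)"
    using assms(1) unfolding chain_below_def by blast
  have sub: "i \<le> k \<Longrightarrow> c i \<subseteq> A" for i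
  proof (induction "k - i" arbitrary: i)
    case 0 then show ?case using c by simp
  next
    case (Suc d)
    then have "c (Suc i) \<subseteq> A" by simp
    moreover have "c i \<subset> c (Suc i)" using c Suc by simp
    ultimately show ?case by blast
  qed
  have "i \<le> k \<Longrightarrow> i \<le> card (c i)" for i
  proof (induction i)
    case (Suc i)
    have "finite (c (Suc i))" using sub[OF Suc.prems] assms(2) finite_subset by blast
    then have "card (c i) < card (c (Suc i))" using c Suc.prems by (intro psubset_card_mono) auto
    then show ?case using Suc by simp
  qed simp
  from this[of k] show ?thesis using c by simp
qed

lemma rank_ex: assumes "F \<in> FF" shows "\<exists>K. F \<in> level FF K"
proof -
  have f: "finite F" using fin assms .
  have c0: "chain_below FF F 0" unfolding chain_below_def using assms by (intro exI[of _ "\<lambda>_. F"]) simp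
  let ?K = "GREATEST k. chain_below FF F k"
  have b: "\<forall>k. chain_below FF F k \<longrightarrow> k \<le> card F" using chain_bound f by blast
  have "chain_below FF F ?K" by (rule GreatestI_nat[where P="\<lambda>k. chain_below FF F k", OF c0]) (use b in blast)
  moreover have "\<not> chain_below FF F (Suc ?K)"
  proof
    assume "chain_below FF F (Suc ?K)"
    then have "Suc ?K \<le> ?K" by (rule Greatest_le_nat[where P="\<lambda>k. chain_below FF F k"]) (use b in blast)
    then show False by simp
  qed
  ultimately show ?thesis using assms unfolding level_def has_rank_def by blast
qed

lemma level_down:
  assumes "F \<in> level FF K" "\<alpha> \<in> F" "j \<le> K"
  shows "\<exists>G\<in>level FF j. \<alpha> \<in> G"
  using assms
proof (induction "K - j" arbitrary: j)
  case 0 then show ?case by auto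
next
  case (Suc d)
  have "d = K - Suc j" "Suc j \<le> K" using Suc.hyps(2) by arith+
  then obtain G where G: "G \<in> level FF (Suc j)" "\<alpha> \<in> G" using Suc.hyps(1) Suc.prems by blast
  then obtain Fs R where d: "decomp FF n r j G Fs R" using dec_ex by blast
  then obtain i where "i < n (Suc j)" "\<alpha> \<in> Fs i" using G unfolding decomp_def by blast
  then show ?case using d unfolding decomp_def by blast
qed

lemma exists_level: "\<exists>F\<in>level FF j. \<alpha> \<in> F"
proof -
  obtain B :: "'a set" where B: "finite B" "card B = Suc (m j)"
    using infinite_arbitrarily_large[OF INF] by blast
  let ?A = "insert \<alpha> B"
  have fA: "finite ?A" using B by simp
  have cA: "card ?A \<ge> Suc (m j)" using B card_mono[OF fA, of B] by auto
  obtain F where F: "F \<in> FF" "?A \<subseteq> F" using cover[OF fA] by blast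
  obtain K where K: "F \<in> level FF K" using rank_ex F by blast
  have "card ?A \<le> card F" using F fin card_mono by blast
  then have "m j < m K" using cA card_level[OF K] by simp
  then have "j \<le> K"
  proof -
    assume a: "m j < m K"
    show "j \<le> K"
    proof (rule ccontr)
      assume "\<not> j \<le> K"
      then have "m K < m j" using m_smono by (simp add: strict_mono_def)
      then show False using a by simp
    qed
  qed
  then show ?thesis using level_down[OF K, of \<alpha> j] F by blast
qed

end

context cs begin

lemma dec_level: "decomp FF n r k F Fs R \<Longrightarrow> i < n (Suc k) \<Longrightarrow> Fs i \<in> level FF k"
  unfolding decomp_def by (elim conjE) (erule allE, erule mp)

lemma dec_union: "decomp FF n r k F Fs R \<Longrightarrow> F = (\<Union>i<n (Suc k). Fs i)"
  unfolding decomp_def by (elim conjE)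

lemma dec_inter: "decomp FF n r k F Fs R \<Longrightarrow> i < n (Suc k) \<Longrightarrow> j < n (Suc k) \<Longrightarrow> i \<noteq> j \<Longrightarrow> Fs i \<inter> Fs j = R"
  unfolding decomp_def by (elim conjE) simp

lemma dec_card_R: "decomp FF n r k F Fs R \<Longrightarrow> card R = r (Suc k)"
  unfolding decomp_def by (elim conjE)

lemma dec_sl: "decomp FF n r k F Fs R \<Longrightarrow> i < n (Suc k) \<Longrightarrow> set_less R (Fs i - R)"
  unfolding decomp_def by (elim conjE) simp

lemma dec_sl2: "decomp FF n r k F Fs R \<Longrightarrow> Suc i < n (Suc k) \<Longrightarrow> set_less (Fs i - R) (Fs (Suc i) - R)"
  unfolding decomp_def by (elim conjE) simp

lemma dec_R_sub: assumes d: "decomp FF n r k F Fs R" and i: "i < n (Suc k)" shows "R \<subseteq> Fs i"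
proof -
  let ?j = "if i = 0 then 1 else 0"
  have "?j < n (Suc k)" using n_ge2[of k] i by auto
  moreover have "i \<noteq> ?j" by simp
  ultimately have "Fs i \<inter> Fs ?j = R" by (rule dec_inter[OF d i])
  then show ?thesis by blast
qed

lemma dec_R_less: assumes d: "decomp FF n r k F Fs R" and i: "i < n (Suc k)" and b: "\<beta> \<in> R" "\<gamma> \<in> Fs i" "\<gamma> \<notin> R" shows "\<beta> < \<gamma>"
proof -
  have "set_less R (Fs i - R)" by (rule dec_sl[OF d i])
  then show ?thesis using b unfolding set_less_def by simp
qed

lemma dec_fin: "decomp FF n r k F Fs R \<Longrightarrow> i < n (Suc k) \<Longrightarrow> finite (Fs i)"
  by (rule level_fin[OF dec_level])

lemma dec_card_diff: assumes d: "decomp FF n r k F Fs R" and i: "i < n (Suc k)"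
  shows "card (Fs i - R) = m k - r (Suc k)"
proof -
  have "finite R" using dec_R_sub[OF d i] dec_fin[OF d i] finite_subset by blast
  then show ?thesis using card_Diff_subset[OF _ dec_R_sub[OF d i]] dec_card_R[OF d]
      card_level[OF dec_level[OF d i]] by simp
qed

lemma dec_diff_ne: "decomp FF n r k F Fs R \<Longrightarrow> i < n (Suc k) \<Longrightarrow> Fs i - R \<noteq> {}"
proof
  assume d: "decomp FF n r k F Fs R" and i: "i < n (Suc k)" and e: "Fs i - R = {}"
  have "card (Fs i - R) = m k - r (Suc k)" by (rule dec_card_diff[OF d i])
  then show False using e r_lt[of k] by simp
qed

lemma dec_ord: assumes d: "decomp FF n r k F Fs R"
  shows "i < j \<Longrightarrow> j < n (Suc k) \<Longrightarrow> \<beta> \<in> Fs i - R \<Longrightarrow> \<gamma> \<in> Fs j - R \<Longrightarrow> \<beta> < \<gamma>"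
proof (induction j arbitrary: \<gamma>)
  case 0 then show ?case by simp
next
  case (Suc j)
  have sl: "set_less (Fs j - R) (Fs (Suc j) - R)" using dec_sl2[OF d] Suc.prems by blast
  show ?case
  proof (cases "i = j")
    case True then show ?thesis using sl Suc.prems unfolding set_less_def by blast
  next
    case False
    then have ij: "i < j" using Suc.prems by simp
    obtain \<delta> where \<delta>: "\<delta> \<in> Fs j - R" using dec_diff_ne[OF d, of j] Suc.prems by auto
    have "\<beta> < \<delta>" using Suc.IH[OF ij _ Suc.prems(3) \<delta>] Suc.prems by simp
    moreover have "\<delta> < \<gamma>" using sl \<delta> Suc.prems unfolding set_less_def by blast
    ultimately show ?thesis by simp
  qed
qed

definition pos :: "nat \<Rightarrow> 'a \<Rightarrow> nat" where
  "pos k \<alpha> = (SOME p. \<exists>F\<in>level FF k. \<alpha> \<in> F \<and> p = card {\<beta>\<in>F. \<beta> < \<alpha>})"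

lemma below_same:
  assumes E: "E \<in> level FF k" and F: "F \<in> level FF k" and a: "\<alpha> \<in> E" "\<alpha> \<in> F"
  shows "{\<beta>\<in>E. \<beta> < \<alpha>} = {\<beta>\<in>F. \<beta> < \<alpha>}"
proof -
  have 1: "initial_sub (E \<inter> F) E" using coh[OF E F] .
  have 2: "initial_sub (F \<inter> E) F" using coh[OF F E] .
  show ?thesis
  proof (intro equalityI subsetI)
    fix \<beta> assume "\<beta> \<in> {\<beta>\<in>E. \<beta> < \<alpha>}"
    then show "\<beta> \<in> {\<beta>\<in>F. \<beta> < \<alpha>}" using 1 a unfolding initial_sub_def by blast
  next
    fix \<beta> assume "\<beta> \<in> {\<beta>\<in>F. \<beta> < \<alpha>}"
    then show "\<beta> \<in> {\<beta>\<in>E. \<beta> < \<alpha>}" using 2 a unfolding initial_sub_def by blast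
  qed
qed

lemma pos_eq: assumes F: "F \<in> level FF k" and a: "\<alpha> \<in> F" shows "pos k \<alpha> = card {\<beta>\<in>F. \<beta> < \<alpha>}"
proof -
  have ex: "\<exists>p. \<exists>F\<in>level FF k. \<alpha> \<in> F \<and> p = card {\<beta>\<in>F. \<beta> < \<alpha>}" using F a by blast
  obtain E where E: "E \<in> level FF k" "\<alpha> \<in> E" "pos k \<alpha> = card {\<beta>\<in>E. \<beta> < \<alpha>}"
    using someI_ex[OF ex] unfolding pos_def by blast
  then show ?thesis using below_same[OF E(1) F E(2) a] by simp
qed

lemma card_below_lt: fixes F :: "'a set" assumes "finite F" "\<alpha> \<in> F" shows "card {\<beta>\<in>F. \<beta> < \<alpha>} < card F"
proof -
  have "\<alpha> \<notin> {\<beta>\<in>F. \<beta> < \<alpha>}" by simp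
  then have "{\<beta>\<in>F. \<beta> < \<alpha>} \<subset> F" using assms(2) by blast
  then show ?thesis by (rule psubset_card_mono[OF assms(1)])
qed

lemma pos_lt: "pos k \<alpha> < m k"
proof -
  obtain F where F: "F \<in> level FF k" "\<alpha> \<in> F" using exists_level by blast
  show ?thesis using pos_eq[OF F] card_below_lt[OF level_fin[OF F(1)] F(2)] card_level[OF F(1)] by simp
qed

lemma pos_step_R:
  assumes d: "decomp FF n r k F Fs R" and F: "F \<in> level FF (Suc k)" and i: "i < n (Suc k)"
    and b: "\<beta> \<in> Fs i" "\<beta> \<in> R"
  shows "pos (Suc k) \<beta> = pos k \<beta> \<and> pos k \<beta> < r (Suc k)"
proof -
  have bF: "\<beta> \<in> F" using dec_union[OF d] i b by blast
  have e: "{\<delta>\<in>F. \<delta> < \<beta>} = {\<delta>\<in>Fs i. \<delta> < \<beta>}"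
  proof (intro equalityI subsetI)
    fix \<delta> assume \<delta>: "\<delta> \<in> {\<delta>\<in>F. \<delta> < \<beta>}"
    then obtain j where j: "j < n (Suc k)" "\<delta> \<in> Fs j" using dec_union[OF d] by blast
    show "\<delta> \<in> {\<delta>\<in>Fs i. \<delta> < \<beta>}"
    proof (cases "\<delta> \<in> R")
      case True then show ?thesis using dec_R_sub[OF d i] \<delta> by blast
    next
      case False then have "\<beta> < \<delta>" using dec_R_less[OF d j(1) b(2) j(2)] by blast
      then show ?thesis using less_not_sym[OF \<open>\<beta> < \<delta>\<close>] \<delta> by simp
    qed
  next
    fix \<delta> assume "\<delta> \<in> {\<delta>\<in>Fs i. \<delta> < \<beta>}"
    then show "\<delta> \<in> {\<delta>\<in>F. \<delta> < \<beta>}" using dec_union[OF d] i by blast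
  qed
  have sub: "{\<delta>\<in>Fs i. \<delta> < \<beta>} \<subset> R"
  proof -
    have "{\<delta>\<in>Fs i. \<delta> < \<beta>} \<subseteq> R"
    proof
      fix \<delta> assume \<delta>: "\<delta> \<in> {\<delta>\<in>Fs i. \<delta> < \<beta>}"
      show "\<delta> \<in> R"
      proof (rule ccontr)
        assume "\<delta> \<notin> R"
        then have "\<beta> < \<delta>" using dec_R_less[OF d i b(2)] \<delta> by blast
        then show False using less_not_sym[OF \<open>\<beta> < \<delta>\<close>] \<delta> by simp
      qed
    qed
    then show ?thesis using b(2) by blast
  qed
  have fR: "finite R" using dec_R_sub[OF d i] dec_fin[OF d i] finite_subset by blast
  have "card {\<delta>\<in>Fs i. \<delta> < \<beta>} < card R" by (rule psubset_card_mono[OF fR sub])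
  then show ?thesis using pos_eq[OF F bF] pos_eq[OF dec_level[OF d i] b(1)] e dec_card_R[OF d] by simp
qed

lemma pos_step_nR:
  assumes d: "decomp FF n r k F Fs R" and F: "F \<in> level FF (Suc k)" and i: "i < n (Suc k)"
    and b: "\<beta> \<in> Fs i" "\<beta> \<notin> R"
  shows "pos (Suc k) \<beta> = (m k - r (Suc k)) * i + pos k \<beta> \<and> r (Suc k) \<le> pos k \<beta> \<and> pos k \<beta> < m k"
proof -
  have bF: "\<beta> \<in> F" using dec_union[OF d] i b by blast
  let ?U = "(\<Union>j<i. Fs j - R)"
  have e: "{\<delta>\<in>F. \<delta> < \<beta>} = ?U \<union> {\<delta>\<in>Fs i. \<delta> < \<beta>}"
  proof (intro equalityI subsetI)
    fix \<delta> assume \<delta>: "\<delta> \<in> {\<delta>\<in>F. \<delta> < \<beta>}"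
    then obtain j where j: "j < n (Suc k)" "\<delta> \<in> Fs j" using dec_union[OF d] by blast
    show "\<delta> \<in> ?U \<union> {\<delta>\<in>Fs i. \<delta> < \<beta>}"
    proof (cases "\<delta> \<in> R")
      case True then show ?thesis using dec_R_sub[OF d i] \<delta> by blast
    next
      case False
      consider "j < i" | "j = i" | "i < j" by arith
      then show ?thesis
      proof cases
        case 1 then show ?thesis using False j by blast
      next
        case 2 then show ?thesis using j \<delta> by blast
      next
        case 3 then have "\<beta> < \<delta>" using dec_ord[OF d 3 j(1)] b j False by blast
        then show ?thesis using less_not_sym[OF \<open>\<beta> < \<delta>\<close>] \<delta> by simp
      qed
    qed
  next
    fix \<delta> assume \<delta>: "\<delta> \<in> ?U \<union> {\<delta>\<in>Fs i. \<delta> < \<beta>}"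
    show "\<delta> \<in> {\<delta>\<in>F. \<delta> < \<beta>}"
    proof (cases "\<delta> \<in> ?U")
      case True
      then obtain j where j: "j < i" "\<delta> \<in> Fs j - R" by blast
      then have "\<delta> < \<beta>" using dec_ord[OF d j(1) i] b by blast
      moreover have "\<delta> \<in> F" using dec_union[OF d] j i by auto
      ultimately show ?thesis by simp
    next
      case False then show ?thesis using \<delta> dec_union[OF d] i by blast
    qed
  qed
  have disj: "?U \<inter> {\<delta>\<in>Fs i. \<delta> < \<beta>} = {}"
  proof -
    have "(Fs j - R) \<inter> Fs i = {}" if "j < i" for j
      using dec_inter[OF d, of j i] that i by auto
    then show ?thesis by blast
  qed
  have fU: "finite ?U" using dec_fin[OF d] i by auto
  have fB: "finite {\<delta>\<in>Fs i. \<delta> < \<beta>}" using dec_fin[OF d i] by simp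
  have cU: "card ?U = i * (m k - r (Suc k))"
  proof -
    have "card ?U = (\<Sum>j<i. card (Fs j - R))"
    proof (rule card_UN_disjoint)
      show "finite {..<i}" by simp
      show "\<forall>j\<in>{..<i}. finite (Fs j - R)" using dec_fin[OF d] i by auto
      show "\<forall>j\<in>{..<i}. \<forall>j'\<in>{..<i}. j \<noteq> j' \<longrightarrow> (Fs j - R) \<inter> (Fs j' - R) = {}"
      proof (intro ballI impI)
        fix j j' assume jj: "j \<in> {..<i}" "j' \<in> {..<i}" "j \<noteq> j'"
        then have "Fs j \<inter> Fs j' = R" using dec_inter[OF d, of j j'] i by simp
        then show "(Fs j - R) \<inter> (Fs j' - R) = {}" by blast
      qed
    qed
    also have "\<dots> = (\<Sum>j<i. m k - r (Suc k))" using dec_card_diff[OF d] i by simp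
    finally show ?thesis by simp
  qed
  have p1: "pos (Suc k) \<beta> = card ?U + card {\<delta>\<in>Fs i. \<delta> < \<beta>}"
    using pos_eq[OF F bF] e card_Un_disjoint[OF fU fB disj] by simp
  have p2: "pos k \<beta> = card {\<delta>\<in>Fs i. \<delta> < \<beta>}" using pos_eq[OF dec_level[OF d i] b(1)] .
  have "R \<subseteq> {\<delta>\<in>Fs i. \<delta> < \<beta>}" using dec_R_sub[OF d i] dec_R_less[OF d i _ b] by blast
  then have "card R \<le> pos k \<beta>" using p2 card_mono[OF fB] by simp
  then show ?thesis using p1 p2 cU dec_card_R[OF d] pos_lt[of k \<beta>] by (simp add: mult.commute)
qed

definition fdown :: "nat \<Rightarrow> nat \<Rightarrow> nat" where
  "fdown k p = (if p < r (Suc k) then p else r (Suc k) + (p - r (Suc k)) mod (m k - r (Suc k)))"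

lemma pos_down: "pos k \<alpha> = fdown k (pos (Suc k) \<alpha>)"
proof -
  obtain F where F: "F \<in> level FF (Suc k)" "\<alpha> \<in> F" using exists_level by blast
  obtain Fs R where d: "decomp FF n r k F Fs R" using dec_ex[OF F(1)] by blast
  obtain i where i: "i < n (Suc k)" "\<alpha> \<in> Fs i" using dec_union[OF d] F(2) by blast
  show ?thesis
  proof (cases "\<alpha> \<in> R")
    case True then show ?thesis using pos_step_R[OF d F(1) i] by (simp add: fdown_def)
  next
    case False
    then have h: "pos (Suc k) \<alpha> = (m k - r (Suc k)) * i + pos k \<alpha>" "r (Suc k) \<le> pos k \<alpha>" "pos k \<alpha> < m k"
      using pos_step_nR[OF d F(1) i] by auto
    have eq: "pos (Suc k) \<alpha> - r (Suc k) = (pos k \<alpha> - r (Suc k)) + (m k - r (Suc k)) * i" using h by simp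
    have "(pos (Suc k) \<alpha> - r (Suc k)) mod (m k - r (Suc k)) = (pos k \<alpha> - r (Suc k)) mod (m k - r (Suc k))"
      unfolding eq by (rule mod_mult_self2)
    also have "\<dots> = pos k \<alpha> - r (Suc k)" using h by simp
    finally have "(pos (Suc k) \<alpha> - r (Suc k)) mod (m k - r (Suc k)) = pos k \<alpha> - r (Suc k)" .
    moreover have "\<not> pos (Suc k) \<alpha> < r (Suc k)" using h by simp
    ultimately show ?thesis using h by (simp add: fdown_def)
  qed
qed

lemma pos_agree: "pos L \<alpha> = pos L \<beta> \<Longrightarrow> j \<le> L \<Longrightarrow> pos j \<alpha> = pos j \<beta>"
proof (induction "L - j" arbitrary: j)
  case 0 then show ?case by simp
next
  case (Suc d)
  then have "pos (Suc j) \<alpha> = pos (Suc j) \<beta>" by simp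
  then show ?case using pos_down[of j \<alpha>] pos_down[of j \<beta>] by simp
qed

end

context cs begin

definition Dbit :: "nat \<Rightarrow> nat \<Rightarrow> nat" where
  "Dbit l p = (case l of 0 \<Rightarrow> 0 | Suc k \<Rightarrow> if p < r (Suc k) then 0 else
     (if r (Suc k) + (p - r (Suc k)) mod (m k - r (Suc k)) \<in> set_decode ((p - r (Suc k)) div (m k - r (Suc k))) then 1 else 0))"

definition Dfun :: "nat \<Rightarrow> nat \<Rightarrow> nat" where
  "Dfun l p = p + m l * Dbit l p"

lemma Dbit_01: "Dbit l p = 0 \<or> Dbit l p = 1"
  unfolding Dbit_def by (cases l) auto

lemma Dfun_le: "p < m l \<Longrightarrow> Dfun l p \<le> 2 * m l"
  using Dbit_01[of l p] unfolding Dfun_def by (elim disjE) simp_all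

lemma Dfun_inj: assumes "p < m l" "p' < m l" "Dfun l p = Dfun l p'" shows "p = p'"
  using Dbit_01[of l p] Dbit_01[of l p'] assms unfolding Dfun_def by (elim disjE) simp_all

definition Dv :: "nat \<Rightarrow> 'a \<Rightarrow> nat" where "Dv l \<alpha> = Dfun l (pos l \<alpha>)"

definition xr :: "'a \<Rightarrow> real" where "xr \<alpha> = XX (\<lambda>l. 2 * m l) (\<lambda>l. Dv l \<alpha>)"

lemma Dv_le: "\<forall>l. Dv l \<alpha> \<le> 2 * m l"
  using Dfun_le pos_lt by (simp add: Dv_def)

lemma C_ge1: "\<forall>l. 1 \<le> 2 * m l"
  using m_pos by (simp add: Suc_le_eq)

lemma x_cmp: "\<forall>j<L. Dv j \<alpha> = Dv j \<beta> \<Longrightarrow> Dv L \<alpha> \<noteq> Dv L \<beta> \<Longrightarrow> (xr \<alpha> < xr \<beta> \<longleftrightarrow> Dv L \<alpha> < Dv L \<beta>)"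
  unfolding xr_def by (rule lex_cmp[OF C_ge1 Dv_le Dv_le])

lemma card_below_inj:
  fixes F :: "'a set"
  assumes "finite F" "\<alpha> \<in> F" "\<beta> \<in> F" "card {\<gamma>\<in>F. \<gamma> < \<alpha>} = card {\<gamma>\<in>F. \<gamma> < \<beta>}"
  shows "\<alpha> = \<beta>"
proof (rule ccontr)
  assume ne: "\<alpha> \<noteq> \<beta>"
  have lt: "card {\<gamma>\<in>F. \<gamma> < u} < card {\<gamma>\<in>F. \<gamma> < v}" if "u < v" "u \<in> F" for u v
  proof (rule psubset_card_mono)
    show "finite {\<gamma>\<in>F. \<gamma> < v}" using assms(1) by simp
    have "{\<gamma>\<in>F. \<gamma> < u} \<subseteq> {\<gamma>\<in>F. \<gamma> < v}" using that by auto
    moreover have "u \<in> {\<gamma>\<in>F. \<gamma> < v} - {\<gamma>\<in>F. \<gamma> < u}" using that by simp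
    ultimately show "{\<gamma>\<in>F. \<gamma> < u} \<subset> {\<gamma>\<in>F. \<gamma> < v}" by blast
  qed
  show False
  proof (cases "\<alpha> < \<beta>")
    case True then show False using lt[of \<alpha> \<beta>] assms by simp
  next
    case False then have "\<beta> < \<alpha>" using ne by simp
    then show False using lt[of \<beta> \<alpha>] assms by simp
  qed
qed

lemma Dv_ex_diff: assumes "\<alpha> \<noteq> \<beta>" shows "\<exists>l. Dv l \<alpha> \<noteq> Dv l \<beta>"
proof -
  obtain F where F: "F \<in> FF" "{\<alpha>, \<beta>} \<subseteq> F" using cover[of "{\<alpha>,\<beta>}"] by auto
  obtain l where l: "F \<in> level FF l" using rank_ex[OF F(1)] by blast
  have aF: "\<alpha> \<in> F" and bF: "\<beta> \<in> F" using F by auto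
  have "pos l \<alpha> \<noteq> pos l \<beta>"
  proof
    assume "pos l \<alpha> = pos l \<beta>"
    then have "card {\<gamma>\<in>F. \<gamma> < \<alpha>} = card {\<gamma>\<in>F. \<gamma> < \<beta>}" using pos_eq[OF l aF] pos_eq[OF l bF] by simp
    then have "\<alpha> = \<beta>" by (rule card_below_inj[OF level_fin[OF l] aF bF])
    then show False using assms by simp
  qed
  then have "Dv l \<alpha> \<noteq> Dv l \<beta>" unfolding Dv_def using Dfun_inj[OF pos_lt pos_lt] by blast
  then show ?thesis by blast
qed

lemma xr_ne: assumes ne: "\<alpha> \<noteq> \<beta>" shows "xr \<alpha> \<noteq> xr \<beta>"
proof -
  obtain L where L: "Dv L \<alpha> \<noteq> Dv L \<beta>" and below: "\<forall>j<L. Dv j \<alpha> = Dv j \<beta>"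
  proof -
    define L where "L = (LEAST l. Dv l \<alpha> \<noteq> Dv l \<beta>)"
    have 1: "Dv L \<alpha> \<noteq> Dv L \<beta>" unfolding L_def using Dv_ex_diff[OF ne] by (rule LeastI_ex)
    have 2: "\<forall>j<L. Dv j \<alpha> = Dv j \<beta>"
    proof (intro allI impI)
      fix j assume "j < L"
      then have "\<not> (Dv j \<alpha> \<noteq> Dv j \<beta>)" unfolding L_def by (rule not_less_Least)
      then show "Dv j \<alpha> = Dv j \<beta>" by blast
    qed
    show ?thesis using that 1 2 by blast
  qed
  have below': "\<forall>j<L. Dv j \<beta> = Dv j \<alpha>" using below by simp
  have c1: "xr \<alpha> < xr \<beta> \<longleftrightarrow> Dv L \<alpha> < Dv L \<beta>" by (rule x_cmp[OF below L])
  have c2: "xr \<beta> < xr \<alpha> \<longleftrightarrow> Dv L \<beta> < Dv L \<alpha>" by (rule x_cmp[OF below' L[symmetric]])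
  have "Dv L \<alpha> < Dv L \<beta> \<or> Dv L \<beta> < Dv L \<alpha>" using L by linarith
  then have "xr \<alpha> < xr \<beta> \<or> xr \<beta> < xr \<alpha>" using c1 c2 by blast
  then show ?thesis by auto
qed

lemma xr_inj: "inj xr"
  using xr_ne unfolding inj_def by blast

lemma below_R:
  assumes d: "decomp FF n r k F Fs R" and j: "j < n (Suc k)" and g: "\<gamma> \<in> R"
  shows "{\<beta>\<in>Fs j. \<beta> < \<gamma>} = {\<beta>\<in>R. \<beta> < \<gamma>}"
proof (intro equalityI subsetI)
  fix \<beta> assume b: "\<beta> \<in> {\<beta>\<in>Fs j. \<beta> < \<gamma>}"
  show "\<beta> \<in> {\<beta>\<in>R. \<beta> < \<gamma>}"
  proof (cases "\<beta> \<in> R")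
    case False
    then have "\<gamma> < \<beta>" using dec_R_less[OF d j g] b by blast
    then show ?thesis using less_not_sym[OF \<open>\<gamma> < \<beta>\<close>] b by simp
  qed (use b in simp)
next
  fix \<beta> assume "\<beta> \<in> {\<beta>\<in>R. \<beta> < \<gamma>}"
  then show "\<beta> \<in> {\<beta>\<in>Fs j. \<beta> < \<gamma>}" using dec_R_sub[OF d j] by blast
qed

lemma n_pos: "0 < n (Suc k)" using n_ge2[of k] by simp

lemma phi_card:
  assumes d: "decomp FF n r k F Fs R" and i: "i < n (Suc k)" and phi: "incr_bij (Fs 0) (Fs i) \<phi>"
    and g: "\<gamma> \<in> Fs 0"
  shows "card {\<beta>\<in>Fs i. \<beta> < \<phi> \<gamma>} = card {\<beta>\<in>Fs 0. \<beta> < \<gamma>}"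
proof -
  have bij: "bij_betw \<phi> (Fs 0) (Fs i)" and sm: "strict_mono_on (Fs 0) \<phi>" using phi unfolding incr_bij_def by auto
  have img: "\<phi> ` {\<beta>\<in>Fs 0. \<beta> < \<gamma>} = {\<beta>\<in>Fs i. \<beta> < \<phi> \<gamma>}"
  proof (intro equalityI subsetI)
    fix y assume "y \<in> \<phi> ` {\<beta>\<in>Fs 0. \<beta> < \<gamma>}"
    then obtain b where b: "b \<in> Fs 0" "b < \<gamma>" "y = \<phi> b" by blast
    then have "\<phi> b < \<phi> \<gamma>" using sm g unfolding strict_mono_on_def by blast
    moreover have "\<phi> b \<in> Fs i" using bij b unfolding bij_betw_def by blast
    ultimately show "y \<in> {\<beta>\<in>Fs i. \<beta> < \<phi> \<gamma>}" using b by simp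
  next
    fix y assume y: "y \<in> {\<beta>\<in>Fs i. \<beta> < \<phi> \<gamma>}"
    then obtain b where b: "b \<in> Fs 0" "y = \<phi> b" using bij unfolding bij_betw_def by auto
    have "b < \<gamma>"
    proof (rule ccontr)
      assume "\<not> b < \<gamma>"
      then have "\<gamma> = b \<or> \<gamma> < b" by auto
      then have "\<phi> \<gamma> \<le> \<phi> b" using sm g b unfolding strict_mono_on_def by (auto intro: less_imp_le)
      moreover have "\<phi> b < \<phi> \<gamma>" using y b by simp
      ultimately show False using leD by blast
    qed
    then show "y \<in> \<phi> ` {\<beta>\<in>Fs 0. \<beta> < \<gamma>}" using b by blast
  qed
  have "inj_on \<phi> {\<beta>\<in>Fs 0. \<beta> < \<gamma>}" using bij_betw_imp_inj_on[OF bij] by (rule inj_on_subset) auto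
  then show ?thesis using card_image img by fastforce
qed

lemma phi_pos:
  assumes d: "decomp FF n r k F Fs R" and i: "i < n (Suc k)" and phi: "incr_bij (Fs 0) (Fs i) \<phi>"
    and g: "\<gamma> \<in> Fs 0"
  shows "pos k (\<phi> \<gamma>) = pos k \<gamma>"
proof -
  have "\<phi> \<gamma> \<in> Fs i" using phi g unfolding incr_bij_def bij_betw_def by blast
  then show ?thesis using pos_eq[OF dec_level[OF d i]] pos_eq[OF dec_level[OF d n_pos] g] phi_card[OF assms] by simp
qed

lemma phi_fix:
  assumes d: "decomp FF n r k F Fs R" and i: "i < n (Suc k)" and phi: "incr_bij (Fs 0) (Fs i) \<phi>"
    and g: "\<gamma> \<in> R"
  shows "\<phi> \<gamma> = \<gamma>"
proof -
  have g0: "\<gamma> \<in> Fs 0" using dec_R_sub[OF d n_pos] g by blast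
  have gi: "\<gamma> \<in> Fs i" using dec_R_sub[OF d i] g by blast
  have pi: "\<phi> \<gamma> \<in> Fs i" using phi g0 unfolding incr_bij_def bij_betw_def by blast
  have c: "card {\<beta>\<in>Fs i. \<beta> < \<phi> \<gamma>} = card {\<beta>\<in>Fs 0. \<beta> < \<gamma>}" by (rule phi_card[OF d i phi g0])
  also have "\<dots> = card {\<beta>\<in>Fs i. \<beta> < \<gamma>}" using below_R[OF d n_pos g] below_R[OF d i g] by simp
  finally show ?thesis using card_below_inj[OF dec_fin[OF d i] pi gi] by simp
qed

lemma phi_nR:
  assumes d: "decomp FF n r k F Fs R" and i: "i < n (Suc k)" and phi: "incr_bij (Fs 0) (Fs i) \<phi>"
    and g: "\<gamma> \<in> Fs 0" "\<gamma> \<notin> R"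
  shows "\<phi> \<gamma> \<in> Fs i \<and> \<phi> \<gamma> \<notin> R"
proof -
  have pi: "\<phi> \<gamma> \<in> Fs i" using phi g unfolding incr_bij_def bij_betw_def by blast
  have "\<phi> \<gamma> \<notin> R"
  proof
    assume pR: "\<phi> \<gamma> \<in> R"
    then have "\<phi> (\<phi> \<gamma>) = \<phi> \<gamma>" by (rule phi_fix[OF d i phi])
    moreover have "\<phi> \<gamma> \<in> Fs 0" using dec_R_sub[OF d n_pos] pR by blast
    moreover have "inj_on \<phi> (Fs 0)" using phi unfolding incr_bij_def bij_betw_def by blast
    ultimately have "\<phi> \<gamma> = \<gamma>" using g(1) by (meson inj_onD)
    then show False using pR g by simp
  qed
  then show ?thesis using pi by simp
qed

end

context cs begin

lemma least_diff:
  assumes "Dv L \<alpha> \<noteq> Dv L \<beta>"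
  shows "\<exists>L'\<le>L. Dv L' \<alpha> \<noteq> Dv L' \<beta> \<and> (\<forall>j<L'. Dv j \<alpha> = Dv j \<beta>)"
proof -
  define L' where "L' = (LEAST l. Dv l \<alpha> \<noteq> Dv l \<beta>)"
  have 1: "Dv L' \<alpha> \<noteq> Dv L' \<beta>" unfolding L'_def using assms by (rule LeastI)
  have 2: "\<forall>j<L'. Dv j \<alpha> = Dv j \<beta>"
  proof (intro allI impI)
    fix j assume "j < L'"
    then have "\<not> (Dv j \<alpha> \<noteq> Dv j \<beta>)" unfolding L'_def by (rule not_less_Least)
    then show "Dv j \<alpha> = Dv j \<beta>" by blast
  qed
  have 3: "L' \<le> L" unfolding L'_def using assms by (rule Least_le)
  show ?thesis using 1 2 3 by blast
qed

lemma step_agree: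
  assumes d: "decomp FF n r k F Fs R" and i: "i < n (Suc k)" and phi: "incr_bij (Fs 0) (Fs i) \<phi>"
    and g: "\<gamma> \<in> Fs 0" and j: "j \<le> k"
  shows "Dv j (\<phi> \<gamma>) = Dv j \<gamma>"
proof -
  have "pos k (\<phi> \<gamma>) = pos k \<gamma>" by (rule phi_pos[OF d i phi g])
  then have "pos j (\<phi> \<gamma>) = pos j \<gamma>" using j by (rule pos_agree)
  then show ?thesis unfolding Dv_def by simp
qed

lemma order_transfer:
  assumes d: "decomp FF n r k F Fs R" and i: "i < n (Suc k)" and phi: "incr_bij (Fs 0) (Fs i) \<phi>"
    and g: "\<gamma> \<in> Fs 0" and de: "\<delta> \<in> Fs 0"
  shows "xr (\<phi> \<gamma>) < xr (\<phi> \<delta>) \<longleftrightarrow> xr \<gamma> < xr \<delta>"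
proof (cases "\<gamma> = \<delta>")
  case True then show ?thesis by simp
next
  case False
  have F0: "Fs 0 \<in> level FF k" by (rule dec_level[OF d n_pos])
  have "pos k \<gamma> \<noteq> pos k \<delta>"
  proof
    assume "pos k \<gamma> = pos k \<delta>"
    then have "card {\<beta>\<in>Fs 0. \<beta> < \<gamma>} = card {\<beta>\<in>Fs 0. \<beta> < \<delta>}" using pos_eq[OF F0 g] pos_eq[OF F0 de] by simp
    then have "\<gamma> = \<delta>" by (rule card_below_inj[OF level_fin[OF F0] g de])
    then show False using False by simp
  qed
  then have "Dv k \<gamma> \<noteq> Dv k \<delta>" unfolding Dv_def using Dfun_inj[OF pos_lt pos_lt] by blast
  then obtain L where L: "L \<le> k" "Dv L \<gamma> \<noteq> Dv L \<delta>" "\<forall>j<L. Dv j \<gamma> = Dv j \<delta>"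
    using least_diff by blast
  have eg: "j \<le> k \<Longrightarrow> Dv j (\<phi> \<gamma>) = Dv j \<gamma>" for j by (rule step_agree[OF d i phi g])
  have ed: "j \<le> k \<Longrightarrow> Dv j (\<phi> \<delta>) = Dv j \<delta>" for j by (rule step_agree[OF d i phi de])
  have L1: "Dv L (\<phi> \<gamma>) \<noteq> Dv L (\<phi> \<delta>)" using L eg ed by simp
  have L2: "\<forall>j<L. Dv j (\<phi> \<gamma>) = Dv j (\<phi> \<delta>)" using L eg ed by simp
  have "xr (\<phi> \<gamma>) < xr (\<phi> \<delta>) \<longleftrightarrow> Dv L (\<phi> \<gamma>) < Dv L (\<phi> \<delta>)" by (rule x_cmp[OF L2 L1])
  also have "\<dots> \<longleftrightarrow> Dv L \<gamma> < Dv L \<delta>" using L eg ed by simp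
  also have "\<dots> \<longleftrightarrow> xr \<gamma> < xr \<delta>" by (rule x_cmp[OF L(3) L(2), symmetric])
  finally show ?thesis .
qed

lemma top_level:
  assumes d: "decomp FF n r k F Fs R" and F: "F \<in> level FF (Suc k)" and i: "i < n (Suc k)"
    and phi: "incr_bij (Fs 0) (Fs i) \<phi>" and g: "\<gamma> \<in> Fs 0" "\<gamma> \<notin> R"
  shows "Dv (Suc k) (\<phi> \<gamma>) = pos (Suc k) (\<phi> \<gamma>) + m (Suc k) * (if pos k \<gamma> \<in> set_decode i then 1 else 0)"
proof -
  have pg: "\<phi> \<gamma> \<in> Fs i" "\<phi> \<gamma> \<notin> R" using phi_nR[OF d i phi g] by auto
  have h: "pos (Suc k) (\<phi> \<gamma>) = (m k - r (Suc k)) * i + pos k (\<phi> \<gamma>)" "r (Suc k) \<le> pos k (\<phi> \<gamma>)"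
    "pos k (\<phi> \<gamma>) < m k" using pos_step_nR[OF d F i pg] by auto
  have pp: "pos k (\<phi> \<gamma>) = pos k \<gamma>" by (rule phi_pos[OF d i phi g(1)])
  define q where "q = pos k \<gamma>"
  define p where "p = pos (Suc k) (\<phi> \<gamma>)"
  define M where "M = m k - r (Suc k)"
  have hq: "p = M * i + q" "r (Suc k) \<le> q" "q < m k" using h pp unfolding q_def p_def M_def by auto
  have np: "\<not> p < r (Suc k)" using hq by simp
  have eq: "p - r (Suc k) = (q - r (Suc k)) + M * i" using hq by simp
  have lt: "q - r (Suc k) < M" using hq unfolding M_def by simp
  have dv: "(p - r (Suc k)) div M = i"
  proof -
    have "(p - r (Suc k)) div M = ((q - r (Suc k)) + M * i) div M" using eq by simp
    also have "\<dots> = (q - r (Suc k)) div M + i" using lt by simp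
    also have "\<dots> = i" using lt by simp
    finally show ?thesis .
  qed
  have md: "(p - r (Suc k)) mod M = q - r (Suc k)"
  proof -
    have "(p - r (Suc k)) mod M = ((q - r (Suc k)) + M * i) mod M" using eq by simp
    also have "\<dots> = (q - r (Suc k)) mod M" by (rule mod_mult_self2)
    also have "\<dots> = q - r (Suc k)" using lt by simp
    finally show ?thesis .
  qed
  have rq: "r (Suc k) + (q - r (Suc k)) = q" using hq by simp
  have "Dbit (Suc k) p = (if q \<in> set_decode i then 1 else 0)"
    unfolding Dbit_def using np dv md rq unfolding M_def by simp
  then show ?thesis unfolding Dv_def Dfun_def p_def q_def by simp
qed

lemma set_encode_lt: assumes "finite Q" "Q \<subseteq> {..<M}" shows "set_encode Q < 2 ^ M"
proof -
  have "set_encode Q = sum ((^) 2) Q" by (simp add: set_encode_def)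
  also have "\<dots> \<le> sum ((^) 2) {..<M}" by (rule sum_mono2) (use assms in auto)
  also have "\<dots> = 2 ^ M - 1" using sum_power2[of M] by (simp add: atLeast0LessThan)
  finally show ?thesis by (metis le_less_trans diff_less less_one pos2 zero_less_power)
qed

end

context cs begin

theorem ent:
  assumes NB: "\<forall>k. 2 ^ m k \<le> n (Suc k)" and FC: "fully_capturing FF n r"
    and UNC: "\<not> countable (UNIV :: 'a set)"
  shows "entangled (range xr)"
  unfolding entangled_def k_entangled_def
proof (intro allI conjI impI)
  fix k
  show unc: "\<not> countable (range xr)"
  proof
    assume "countable (range xr)"
    then have "countable (UNIV :: 'a set)" by (rule countable_image_inj_on) (rule xr_inj)
    then show False using UNC by simp
  qed
  fix A t
  assume H: "A \<subseteq> ksubsets k (range xr) \<and> \<not> countable A \<and> (\<forall>a\<in>A. \<forall>b\<in>A. a \<noteq> b \<longrightarrow> a \<inter> b = {})"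
  have AK: "A \<subseteq> ksubsets k (range xr)" using H by (rule conjunct1)
  have Aunc: "\<not> countable A" using H by (elim conjE)
  have Adisj0: "\<forall>a\<in>A. \<forall>b\<in>A. a \<noteq> b \<longrightarrow> a \<inter> b = {}" using H by (elim conjE)
  have Adisj: "a \<inter> b = {}" if "a \<in> A" "b \<in> A" "a \<noteq> b" for a b using Adisj0 that by blast
  have Aprop: "a \<subseteq> range xr" "finite a" "card a = k" if "a \<in> A" for a
  proof -
    have "a \<in> ksubsets k (range xr)" using AK that by (rule subsetD)
    then show "a \<subseteq> range xr" "finite a" "card a = k" unfolding ksubsets_def by simp_all
  qed
  have kpos: "0 < k"
  proof (rule ccontr)
    assume "\<not> 0 < k"
    then have k0: "k = 0" by simp
    have "A \<subseteq> {{}}"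
    proof
      fix a assume a: "a \<in> A"
      then have "a = {}" using Aprop(2,3)[OF a] k0 by simp
      then show "a \<in> {{}}" by simp
    qed
    then have "finite A" using finite_subset by blast
    then have "countable A" by (rule countable_finite)
    then show False using Aunc by simp
  qed
  have img: "xr ` (xr -` a) = a" if "a \<in> A" for a using Aprop(1)[OF that] by blast
  define S where "S = (\<lambda>a. xr -` a) ` A"
  have fS: "\<forall>s\<in>S. finite s"
  proof
    fix s assume "s \<in> S"
    then obtain a where a: "a \<in> A" "s = xr -` a" unfolding S_def by blast
    show "finite s" unfolding a(2) by (rule finite_vimageI[OF Aprop(2)[OF a(1)] xr_inj])
  qed
  have injS: "inj_on (\<lambda>a. xr -` a) A"
  proof (rule inj_onI)
    fix a b assume ab: "a \<in> A" "b \<in> A" "xr -` a = xr -` b"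
    have "a = xr ` (xr -` a)" using img[OF ab(1)] by simp
    also have "\<dots> = xr ` (xr -` b)" using ab(3) by simp
    also have "\<dots> = b" using img[OF ab(2)] by simp
    finally show "a = b" .
  qed
  have Sunc: "\<not> countable S"
  proof
    assume "countable S"
    then have "countable A" unfolding S_def by (rule countable_image_inj_on) (rule injS)
    then show False using Aunc by simp
  qed
  have "\<exists>C l F. C \<subseteq> S \<and> finite C \<and> l > 0 \<and> F \<in> level FF l \<and> fully_captures FF n r l F C"
  proof -
    have "\<forall>S k. (\<forall>s\<in>S. finite s) \<and> \<not> countable S \<longrightarrow>
        (\<exists>C l F. C \<subseteq> S \<and> finite C \<and> l > k \<and> F \<in> level FF l \<and> fully_captures FF n r l F C)"
      using FC unfolding fully_capturing_def .
    then have "(\<forall>s\<in>S. finite s) \<and> \<not> countable S \<longrightarrow>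
        (\<exists>C l F. C \<subseteq> S \<and> finite C \<and> l > 0 \<and> F \<in> level FF l \<and> fully_captures FF n r l F C)"
      by (elim allE)
    then show ?thesis using fS Sunc by blast
  qed
  then obtain C l F where CF: "C \<subseteq> S" "finite C" "l > 0" "F \<in> level FF l" "fully_captures FF n r l F C"
    by blast
  obtain k1 where l: "l = Suc k1" using CF(3) not0_implies_Suc by blast
  obtain Fs R c where d: "decomp FF n r k1 F Fs R" and Cc: "C = c ` {..<n l}" and cardC: "card C = n l"
    and cprop: "\<And>i. i < n l \<Longrightarrow> c i \<subseteq> Fs i \<and> (\<exists>\<phi>. incr_bij (Fs 0) (Fs i) \<phi> \<and> \<phi> ` c 0 = c i)"
  proof -
    have cC: "card C = n l" using CF(5) unfolding fully_captures_def by (elim conjE) assumption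
    have ex: "\<exists>Fs R. decomp FF n r (l - 1) F Fs R \<and>
       (\<exists>c::nat \<Rightarrow> 'a set. C = c ` {..<n l} \<and>
          (\<forall>i<n l. c i \<subseteq> Fs i \<and> c i - R \<noteq> {} \<and>
             (\<exists>\<phi>. incr_bij (Fs 0) (Fs i) \<phi> \<and> \<phi> ` c 0 = c i)))"
      using CF(5) unfolding fully_captures_def by (elim conjE) assumption
    from ex obtain Fs R c where "decomp FF n r (l - 1) F Fs R" "C = c ` {..<n l}"
        "\<forall>i<n l. c i \<subseteq> Fs i \<and> c i - R \<noteq> {} \<and> (\<exists>\<phi>. incr_bij (Fs 0) (Fs i) \<phi> \<and> \<phi> ` c 0 = c i)"
      by blast
    then show ?thesis using that cC l by simp
  qed
  have Fl: "F \<in> level FF (Suc k1)" using CF(4) l by simp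
  define ph where "ph i = (SOME \<phi>. incr_bij (Fs 0) (Fs i) \<phi> \<and> \<phi> ` c 0 = c i)" for i
  have ph: "incr_bij (Fs 0) (Fs i) (ph i)" "ph i ` c 0 = c i" if "i < n l" for i
  proof -
    have "\<exists>\<phi>. incr_bij (Fs 0) (Fs i) \<phi> \<and> \<phi> ` c 0 = c i" using cprop[OF that] by blast
    then have "incr_bij (Fs 0) (Fs i) (ph i) \<and> ph i ` c 0 = c i" unfolding ph_def by (rule someI_ex)
    then show "incr_bij (Fs 0) (Fs i) (ph i)" "ph i ` c 0 = c i" by auto
  qed
  have nl: "n l = n (Suc k1)" using l by simp
  have n2: "2 \<le> n l" using n_ge2 nl by simp
  have cinj: "inj_on c {..<n l}"
  proof (rule eq_card_imp_inj_on)
    show "finite {..<n l}" by simp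
    show "card (c ` {..<n l}) = card {..<n l}" using cardC Cc by simp
  qed
  define aa where "aa i = xr ` c i" for i
  have aaA: "aa i \<in> A" and cvim: "c i = xr -` aa i" if "i < n l" for i
  proof -
    have "c i \<in> C" using Cc that by simp
    then have "c i \<in> S" using CF(1) by blast
    then obtain a where a: "a \<in> A" "c i = xr -` a" unfolding S_def by blast
    then have "aa i = a" unfolding aa_def using img by simp
    then show "aa i \<in> A" "c i = xr -` aa i" using a by auto
  qed
  have aa_inj: "aa i \<noteq> aa j" if "i < n l" "j < n l" "i \<noteq> j" for i j
  proof
    assume "aa i = aa j"
    then have "c i = c j" using cvim[OF that(1)] cvim[OF that(2)] by simp
    then show False using inj_onD[OF cinj] that by simp
  qed
  have cdisj: "c i \<inter> c j = {}" if "i < n l" "j < n l" "i \<noteq> j" for i j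
  proof -
    have "aa i \<inter> aa j = {}" by (rule Adisj[OF aaA[OF that(1)] aaA[OF that(2)] aa_inj[OF that]])
    then show ?thesis unfolding aa_def by blast
  qed
  have c0R: "c 0 \<inter> R = {}"
  proof (rule ccontr)
    assume "c 0 \<inter> R \<noteq> {}"
    then obtain \<gamma> where g: "\<gamma> \<in> c 0" "\<gamma> \<in> R" by blast
    have one: "1 < n (Suc k1)" using n2 nl by simp
    have o1: "1 < n l" using one nl by simp
    have e1: "ph 1 \<gamma> = \<gamma>" by (rule phi_fix[OF d one ph(1)[OF o1] g(2)])
    have "ph 1 \<gamma> \<in> ph 1 ` c 0" using g(1) by (rule imageI)
    then have "ph 1 \<gamma> \<in> c 1" using ph(2)[OF o1] by simp
    then have g1: "\<gamma> \<in> c 1" using e1 by simp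
    have "c 0 \<inter> c 1 = {}" using cdisj[of 0 1] o1 by simp
    then show False using g(1) g1 by blast
  qed
  have n0: "0 < n l" using n2 by simp
  have c0F: "c 0 \<subseteq> Fs 0" using cprop[OF n0] by blast
  have fc0: "finite (c 0)" using dec_fin[OF d n_pos] c0F finite_subset by blast
  have aa0: "aa 0 = xr ` c 0" unfolding aa_def by simp
  define s0 where "s0 = sorted_list_of_set (aa 0)"
  have cardaa: "card (aa i) = k" if "i < n l" for i using Aprop(3)[OF aaA[OF that]] .
  have finaa: "finite (aa i)" if "i < n l" for i using Aprop(2)[OF aaA[OF that]] .
  have ls0: "length s0 = k" unfolding s0_def using cardaa[OF n0] by simp
  have sets0: "set s0 = aa 0" unfolding s0_def using finaa[OF n0] by simp
  have sorted0: "sorted_wrt (<) s0" unfolding s0_def by (rule strict_sorted_list_of_set)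
  have dist0: "distinct s0" unfolding s0_def by simp
  define gg where "gg j = inv_into (c 0) xr (s0 ! j)" for j
  have gg: "gg j \<in> c 0" "xr (gg j) = s0 ! j" if "j < k" for j
  proof -
    have "s0 ! j \<in> set s0" using ls0 that by simp
    then have "s0 ! j \<in> xr ` c 0" using sets0 aa0 by simp
    then show "gg j \<in> c 0" "xr (gg j) = s0 ! j" unfolding gg_def
      by (auto intro: inv_into_into f_inv_into_f)
  qed
  have gg_img: "gg ` {..<k} = c 0"
  proof (intro equalityI subsetI)
    fix \<gamma> assume "\<gamma> \<in> gg ` {..<k}" then show "\<gamma> \<in> c 0" using gg by auto
  next
    fix \<gamma> assume g: "\<gamma> \<in> c 0"
    then have "xr \<gamma> \<in> set s0" using sets0 aa0 by simp
    then obtain j where j: "j < length s0" "s0 ! j = xr \<gamma>" by (auto simp: in_set_conv_nth)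
    then have j: "j < k" "s0 ! j = xr \<gamma>" using ls0 by auto
    have "gg j = inv_into (c 0) xr (xr \<gamma>)" unfolding gg_def using j by simp
    also have "\<dots> = \<gamma>" using inv_into_f_f[OF inj_on_subset[OF xr_inj subset_UNIV] g] .
    finally show "\<gamma> \<in> gg ` {..<k}" using j by blast
  qed
  have gR: "gg j \<in> Fs 0" "gg j \<notin> R" if "j < k" for j using gg(1)[OF that] c0F c0R by auto
  have sl: "sorted_list_of_set (aa i) = map (\<lambda>j. xr (ph i (gg j))) [0..<k]" if i: "i < n l" for i
  proof -
    have i': "i < n (Suc k1)" using i nl by simp
    have "sorted_wrt (<) (map (\<lambda>j. xr (ph i (gg j))) [0..<k]) \<and> set (map (\<lambda>j. xr (ph i (gg j))) [0..<k]) = aa i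
        \<and> length (map (\<lambda>j. xr (ph i (gg j))) [0..<k]) = card (aa i)"
    proof (intro conjI)
      show "sorted_wrt (<) (map (\<lambda>j. xr (ph i (gg j))) [0..<k])"
        unfolding sorted_wrt_iff_nth_less
      proof (intro allI impI)
        fix j j' assume jj: "j < j'" "j' < length (map (\<lambda>j. xr (ph i (gg j))) [0..<k])"
        then have jk: "j < k" "j' < k" by auto
        have "s0 ! j < s0 ! j'" using sorted_wrt_nth_less[OF sorted0 jj(1)] jk ls0 by simp
        then have "xr (gg j) < xr (gg j')" using gg jk by simp
        then have "xr (ph i (gg j)) < xr (ph i (gg j'))"
          using order_transfer[OF d i' ph(1)[OF i] gR(1)[OF jk(1)] gR(1)[OF jk(2)]] by simp
        then show "map (\<lambda>j. xr (ph i (gg j))) [0..<k] ! j < map (\<lambda>j. xr (ph i (gg j))) [0..<k] ! j'"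
          using jk by simp
      qed
      have "set (map (\<lambda>j. xr (ph i (gg j))) [0..<k]) = xr ` ph i ` gg ` {..<k}"
        by (auto simp: image_image)
      also have "\<dots> = aa i" using gg_img ph(2)[OF i] unfolding aa_def by simp
      finally show "set (map (\<lambda>j. xr (ph i (gg j))) [0..<k]) = aa i" .
      show "length (map (\<lambda>j. xr (ph i (gg j))) [0..<k]) = card (aa i)" using cardaa[OF i] by simp
    qed
    then show ?thesis using sorted_list_of_set_unique finaa[OF i] by metis
  qed
  have slj: "sorted_list_of_set (aa i) ! j = xr (ph i (gg j))" if "i < n l" "j < k" for i j
    using sl[OF that(1)] that(2) by simp
  have posinj: "pos k1 (gg j) = pos k1 (gg j') \<Longrightarrow> j = j'" if "j < k" "j' < k" for j j'
  proof -
    assume p: "pos k1 (gg j) = pos k1 (gg j')"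
    have F0: "Fs 0 \<in> level FF k1" by (rule dec_level[OF d n_pos])
    have "card {\<beta>\<in>Fs 0. \<beta> < gg j} = card {\<beta>\<in>Fs 0. \<beta> < gg j'}"
      using p pos_eq[OF F0 gR(1)[OF that(1)]] pos_eq[OF F0 gR(1)[OF that(2)]] by simp
    then have "gg j = gg j'" by (rule card_below_inj[OF level_fin[OF F0] gR(1)[OF that(1)] gR(1)[OF that(2)]])
    then have "s0 ! j = s0 ! j'" using gg(2)[OF that(1)] gg(2)[OF that(2)] by simp
    then show "j = j'" using dist0 that ls0 by (simp add: nth_eq_iff_index_eq)
  qed
  define Q0 where "Q0 = (\<lambda>j. pos k1 (gg j)) ` {j. j < k \<and> \<not> t j}"
  define Q1 where "Q1 = (\<lambda>j. pos k1 (gg j)) ` {j. j < k \<and> t j}"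
  have fQ: "finite Q0" "finite Q1" unfolding Q0_def Q1_def by auto
  have Qsub: "Q0 \<subseteq> {..<m k1}" "Q1 \<subseteq> {..<m k1}" unfolding Q0_def Q1_def using pos_lt by auto
  have memQ0: "pos k1 (gg j) \<in> Q0 \<longleftrightarrow> \<not> t j" if j: "j < k" for j
  proof
    assume "pos k1 (gg j) \<in> Q0"
    then obtain j' where "j' < k" "\<not> t j'" "pos k1 (gg j) = pos k1 (gg j')" unfolding Q0_def by auto
    then show "\<not> t j" using posinj[OF j] by metis
  next
    assume "\<not> t j" then show "pos k1 (gg j) \<in> Q0" unfolding Q0_def using j by blast
  qed
  have memQ1: "pos k1 (gg j) \<in> Q1 \<longleftrightarrow> t j" if j: "j < k" for j
  proof
    assume "pos k1 (gg j) \<in> Q1"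
    then obtain j' where "j' < k" "t j'" "pos k1 (gg j) = pos k1 (gg j')" unfolding Q1_def by auto
    then show "t j" using posinj[OF j] by metis
  next
    assume "t j" then show "pos k1 (gg j) \<in> Q1" unfolding Q1_def using j by blast
  qed
  define i0 where "i0 = set_encode Q0"
  define i1 where "i1 = set_encode Q1"
  have dec0: "set_decode i0 = Q0" unfolding i0_def using fQ by simp
  have dec1: "set_decode i1 = Q1" unfolding i1_def using fQ by simp
  have i0l: "i0 < n l"
  proof -
    have "i0 < 2 ^ m k1" unfolding i0_def by (rule set_encode_lt[OF fQ(1) Qsub(1)])
    also have "\<dots> \<le> n (Suc k1)" using NB by blast
    finally show ?thesis using nl by simp
  qed
  have i1l: "i1 < n l"
  proof -
    have "i1 < 2 ^ m k1" unfolding i1_def by (rule set_encode_lt[OF fQ(2) Qsub(2)])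
    also have "\<dots> \<le> n (Suc k1)" using NB by blast
    finally show ?thesis using nl by simp
  qed
  have i01: "i0 \<noteq> i1"
  proof
    assume "i0 = i1"
    then have "Q0 = Q1" using dec0 dec1 by simp
    then show False using memQ0[OF kpos] memQ1[OF kpos] by simp
  qed
  have ne: "aa i0 \<noteq> aa i1" using aa_inj[OF i0l i1l i01] .
  have "realizes k t (aa i0) (aa i1)"
      unfolding realizes_def
    proof (intro conjI allI impI)
      show "aa i0 \<inter> aa i1 = {}" by (rule Adisj[OF aaA[OF i0l] aaA[OF i1l] ne])
      fix j assume j: "j < k"
      have i0': "i0 < n (Suc k1)" and i1': "i1 < n (Suc k1)" using i0l i1l nl by auto
      let ?g = "gg j"
      have agree: "\<forall>j'<Suc k1. Dv j' (ph i0 ?g) = Dv j' (ph i1 ?g)"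
        using step_agree[OF d i0' ph(1)[OF i0l] gR(1)[OF j]] step_agree[OF d i1' ph(1)[OF i1l] gR(1)[OF j]]
        by simp
      have t0: "Dv (Suc k1) (ph i0 ?g) = pos (Suc k1) (ph i0 ?g) + m (Suc k1) * (if t j then 0 else 1)"
        using top_level[OF d Fl i0' ph(1)[OF i0l] gR[OF j]] dec0 memQ0[OF j] by simp
      have t1: "Dv (Suc k1) (ph i1 ?g) = pos (Suc k1) (ph i1 ?g) + m (Suc k1) * (if t j then 1 else 0)"
        using top_level[OF d Fl i1' ph(1)[OF i1l] gR[OF j]] dec1 memQ1[OF j] by simp
      have p0: "pos (Suc k1) (ph i0 ?g) < m (Suc k1)" and p1: "pos (Suc k1) (ph i1 ?g) < m (Suc k1)"
        using pos_lt by auto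
      have a0: "sorted_list_of_set (aa i0) ! j = xr (ph i0 ?g)" using slj[OF i0l j] .
      have a1: "sorted_list_of_set (aa i1) ! j = xr (ph i1 ?g)" using slj[OF i1l j] .
      show "if t j then sorted_list_of_set (aa i0) ! j < sorted_list_of_set (aa i1) ! j
            else sorted_list_of_set (aa i1) ! j < sorted_list_of_set (aa i0) ! j"
      proof (cases "t j")
        case True
        then have lt: "Dv (Suc k1) (ph i0 ?g) < Dv (Suc k1) (ph i1 ?g)" using t0 t1 p0 p1 by simp
        then have "xr (ph i0 ?g) < xr (ph i1 ?g)" using x_cmp[OF agree] by simp
        then show ?thesis using True a0 a1 by simp
      next
        case False
        then have lt: "Dv (Suc k1) (ph i1 ?g) < Dv (Suc k1) (ph i0 ?g)" using t0 t1 p0 p1 by simp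
        have agree': "\<forall>j'<Suc k1. Dv j' (ph i1 ?g) = Dv j' (ph i0 ?g)" using agree by simp
        have "xr (ph i1 ?g) < xr (ph i0 ?g)" using x_cmp[OF agree'] lt by simp
        then show ?thesis using False a0 a1 by simp
      qed
    qed
  then show "\<exists>a\<in>A. \<exists>b\<in>A. a \<noteq> b \<and> realizes k t a b" using aaA[OF i0l] aaA[OF i1l] ne by blast
qed

end

theorem mainTheorem7:
  assumes "\<not> countable (UNIV :: 'a::wellorder set)"
    and "\<forall>x::'a. countable {y. y < x}"
    and "FCA TYPE('a)"
  shows "\<exists>E::real set. entangled E"
proof -
  have "\<exists>FF::'a set set. construction_scheme UNIV FF mt nt rt \<and> fully_capturing FF nt rt"
    using assms(3) type_ok unfolding FCA_def by blast
  then obtain FF :: "'a set set" where FF: "construction_scheme UNIV FF mt nt rt" "fully_capturing FF nt rt"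
    by blast
  have inf: "infinite (UNIV :: 'a set)" using assms(1) countable_finite by blast
  interpret cs FF mt nt rt using FF(1) type_ok inf by unfold_locales
  have NB: "\<forall>k. 2 ^ mt k \<le> nt (Suc k)" by (simp add: nt_def)
  have "entangled (range xr)" by (rule ent[OF NB FF(2) assms(1)])
  then show ?thesis by blast
qed

end
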